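(* Let $\mathcal{L}_{\rm TM}$ be the Thue–Morse language and let ${\rm S}:\mathcal{L}_{\rm TM}\to\mathbb{N}$ be a homomorphism with $\gcd({\rm S}(a),{\rm S}(b))=1$. Then $\mathbb{N}\setminus{\rm S}(\mathcal{L}_{\rm TM})$ is infinite if and only if ${\rm S}(a)+{\rm S}(b)\ge6$. If ${\rm S}(a)+{\rm S}(b)<6$, then $\mathbb{N}\setminus{\rm S}(\mathcal{L}_{\rm TM})$ is either empty or a singleton.
   Context: $\mathbb{N}=\{1,2,3,\dots\}$. Let $\theta$ be the Thue–Morse morphism on $\{a,b\}$, $\theta(a)=ab$, $\theta(b)=ba$. The Thue–Morse language $\mathcal{L}_{\rm TM}$ is the set of all nonempty finite words occurring as factors of $\theta^n(a)$ for some $n\ge0$. A homomorphism ${\rm S}:\mathcal{L}_{\rm TM}\to\mathbb{N}$ is a map with ${\rm S}(w_1\cdots w_n)={\rm S}(w_1)+\cdots+{\rm S}(w_n)$, determined by ${\rm S}(a),{\rm S}(b)\in\mathbb{N}$. *)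

theory Defs
  imports Main "HOL-Library.Sublist"
begin

datatype letter = A | B

fun tm_morph :: "letter \<Rightarrow> letter list" where
  "tm_morph A = [A, B]"
| "tm_morph B = [B, A]"

definition theta :: "letter list \<Rightarrow> letter list" where
  "theta w = concat (map tm_morph w)"

definition L_TM :: "letter list set" where
  "L_TM = {w. w \<noteq> [] \<and> (\<exists>n. sublist w ((theta ^^ n) [A]))}"

definition S_hom :: "nat \<Rightarrow> nat \<Rightarrow> letter list \<Rightarrow> nat" where
  "S_hom sa sb w = sum_list (map (\<lambda>x. case x of A \<Rightarrow> sa | B \<Rightarrow> sb) w)"

end

theory Submission
  imports Defs
begin

definition ca :: "letter list \<Rightarrow> nat" where "ca w = length (filter (\<lambda>x. x = A) w)"
definition cb :: "letter list \<Rightarrow> nat" where "cb w = length (filter (\<lambda>x. x = B) w)"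

definition fac :: "letter list \<Rightarrow> bool" where
  "fac w \<longleftrightarrow> (\<exists>n. sublist w ((theta ^^ n) [A]))"

lemma S_hom_eq: "S_hom sa sb w = ca w * sa + cb w * sb"
  by (induction w) (auto simp: S_hom_def ca_def cb_def split: letter.splits)

lemma theta_append[simp]: "theta (x @ y) = theta x @ theta y"
  by (simp add: theta_def)
lemma theta_Cons[simp]: "theta (c # y) = tm_morph c @ theta y"
  by (simp add: theta_def)
lemma theta_Nil[simp]: "theta [] = []"
  by (simp add: theta_def)

lemma ca_theta[simp]: "ca (theta u) = length u"
proof (induction u)
  case (Cons c u) thus ?case by (cases c) (auto simp: ca_def)
qed (simp add: ca_def)
lemma cb_theta[simp]: "cb (theta u) = length u"
proof (induction u)
  case (Cons c u) thus ?case by (cases c) (auto simp: cb_def)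
qed (simp add: cb_def)

lemma fac_sub: "sublist v w \<Longrightarrow> fac w \<Longrightarrow> fac v"
  unfolding fac_def using sublist_order.order_trans by blast

lemma fac_theta: "fac w \<Longrightarrow> fac (theta w)"
proof -
  assume "fac w"
  then obtain n where "sublist w ((theta ^^ n) [A])" by (auto simp: fac_def)
  then obtain p s where "(theta ^^ n) [A] = p @ w @ s" by (auto simp: sublist_def)
  hence "(theta ^^ Suc n) [A] = theta p @ theta w @ theta s" by simp
  thus ?thesis unfolding fac_def sublist_def by blast
qed

lemma theta3: "(theta ^^ 3) [A] = [A,B,B,A,B,A,A,B]"
  by (simp add: numeral_3_eq_3)

definition neg :: "letter \<Rightarrow> letter" where "neg x = (case x of A \<Rightarrow> B | B \<Rightarrow> A)"

lemma tm_morph_neg: "tm_morph x = [x, neg x]"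
  by (cases x) (auto simp: neg_def)

lemma length_theta[simp]: "length (theta u) = 2 * length u"
  by (induction u) (auto simp: tm_morph_neg)

definition P :: "letter \<Rightarrow> letter \<Rightarrow> nat \<Rightarrow> bool" where
  "P x y m \<longleftrightarrow> (\<exists>u. length u = m \<and> fac (x # u @ [y]))"

lemma fac_pair_aux: "fac [x, y]"
proof -
  have e: "(theta ^^ 3) [A] = [A,B,B,A,B,A,A,B]" by (rule theta3)
  have "\<exists>p s. [A,B,B,A,B,A,A,B] = p @ [x, y] @ s"
  proof (cases x; cases y)
    assume "x = A" "y = A" thus ?thesis by (intro exI[of _ "[A,B,B,A,B]"] exI[of _ "[B]"]) simp
  next
    assume "x = A" "y = B" thus ?thesis by (intro exI[of _ "[]"] exI[of _ "[B,A,B,A,A,B]"]) simp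
  next
    assume "x = B" "y = A" thus ?thesis by (intro exI[of _ "[A,B]"] exI[of _ "[B,A,A,B]"]) simp
  next
    assume "x = B" "y = B" thus ?thesis by (intro exI[of _ "[A]"] exI[of _ "[A,B,A,A,B]"]) simp
  qed
  thus ?thesis unfolding fac_def sublist_def e[symmetric] by blast
qed

lemma P_base: "P x y 0"
  using fac_pair_aux[of x y] by (auto simp: P_def)

lemma P_odd: "P x y j \<Longrightarrow> P x y (2*j+1)"
proof -
  assume "P x y j"
  then obtain u where u: "length u = j" "fac (x # u @ [y])" by (auto simp: P_def)
  have f: "fac (theta (x # u @ [y]))" using u fac_theta by blast
  have "theta (x # u @ [y]) = x # (neg x # theta u) @ [y] @ [neg y]"
    by (simp add: tm_morph_neg)
  hence "sublist (x # (neg x # theta u) @ [y]) (theta (x # u @ [y]))"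
    unfolding sublist_def by (intro exI[of _ "[]"] exI[of _ "[neg y]"]) simp
  hence "fac (x # (neg x # theta u) @ [y])" using f fac_sub by blast
  moreover have "length (neg x # theta u) = 2*j+1"
    using u by simp
  ultimately show ?thesis unfolding P_def by blast
qed


lemma P_even: "P x y j \<Longrightarrow> P x (neg y) (2*j+2)"
proof -
  assume "P x y j"
  then obtain u where u: "length u = j" "fac (x # u @ [y])" by (auto simp: P_def)
  have f: "fac (theta (x # u @ [y]))" using u fac_theta by blast
  have "theta (x # u @ [y]) = x # (neg x # theta u @ [y]) @ [neg y]"
    by (simp add: tm_morph_neg)
  hence "fac (x # (neg x # theta u @ [y]) @ [neg y])" using f by simp
  moreover have "length (neg x # theta u @ [y]) = 2*j+2"
    using u by simp
  ultimately show ?thesis unfolding P_def by blast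
qed

lemma neg_neg[simp]: "neg (neg y) = y"
  by (cases y) (auto simp: neg_def)

lemma P_all: "P x y m"
proof (induction m arbitrary: x y rule: less_induct)
  case (less m)
  show ?case
  proof (cases "m = 0")
    case True thus ?thesis using P_base by simp
  next
    case False
    show ?thesis
    proof (cases "odd m")
      case True
      then obtain j where "m = 2*j+1" by (rule oddE)
      thus ?thesis using less P_odd by auto
    next
      case False2: False
      define j where "j = m div 2 - 1"
      have j: "m = 2*j+2" using False False2 unfolding j_def by presburger
      have "P x (neg y) j" using less j by auto
      from P_even[OF this] show ?thesis using j by simp
    qed
  qed
qed

lemma cnt_simps: "ca (A # w) = Suc (ca w)" "cb (A # w) = cb w" "ca (B # w) = ca w" "cb (B # w) = Suc (cb w)"
  "ca (x @ y) = ca x + ca y" "cb (x @ y) = cb x + cb y" "ca [] = 0" "cb [] = 0"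
  by (simp_all add: ca_def cb_def)

definition D :: "letter list \<Rightarrow> int" where "D w = int (ca w) - int (cb w)"

lemma D_append[simp]: "D (x @ y) = D x + D y"
  by (simp add: D_def ca_def cb_def)

lemma D_Nil[simp]: "D [] = 0" by (simp add: D_def ca_def cb_def)
lemma D_single: "\<bar>D [c]\<bar> = 1" by (cases c) (simp_all add: D_def ca_def cb_def)
lemma D_pair: "D [c, neg c] = 0" by (cases c) (simp_all add: D_def ca_def cb_def neg_def)

lemma prefix_D: "prefix X (theta v) \<Longrightarrow> \<bar>D X\<bar> \<le> 1"
proof (induction v arbitrary: X)
  case Nil thus ?case by simp
next
  case (Cons c v)
  have "prefix X ([c, neg c] @ theta v)" using Cons.prems by (simp add: tm_morph_neg)
  hence "prefix X [c, neg c] \<or> (\<exists>zs. X = [c, neg c] @ zs \<and> prefix zs (theta v))"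
    by (rule prefix_append[THEN iffD1])
  thus ?case
  proof
    assume "prefix X [c, neg c]"
    hence "X = [] \<or> X = [c] \<or> X = [c, neg c]"
      by (auto simp: prefix_Cons)
    thus ?thesis using D_single[of c] D_pair[of c] by auto
  next
    assume "\<exists>zs. X = [c, neg c] @ zs \<and> prefix zs (theta v)"
    then obtain zs where "X = [c, neg c] @ zs" "prefix zs (theta v)" by blast
    thus ?thesis using Cons.IH D_pair[of c] D_append[of "[c, neg c]" zs] by simp
  qed
qed

lemma sublist_D: "sublist w (theta v) \<Longrightarrow> \<bar>D w\<bar> \<le> 2"
proof -
  assume "sublist w (theta v)"
  then obtain p s where ps: "theta v = p @ w @ s" by (auto simp: sublist_def)
  have "prefix p (theta v)" "prefix (p @ w) (theta v)" using ps by (auto simp: prefix_def)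
  hence "\<bar>D p\<bar> \<le> 1" "\<bar>D (p @ w)\<bar> \<le> 1" using prefix_D by blast+
  thus ?thesis by simp
qed

lemma fac_D: "fac w \<Longrightarrow> \<bar>D w\<bar> \<le> 2"
proof -
  assume "fac w"
  then obtain n where n: "sublist w ((theta ^^ n) [A])" by (auto simp: fac_def)
  show ?thesis
  proof (cases n)
    case 0
    hence "sublist w [A]" using n by simp
    hence "w = [] \<or> w = [A]" by (auto simp: sublist_def Cons_eq_append_conv append_eq_Cons_conv)
    thus ?thesis using D_single[of A] by auto
  next
    case (Suc m)
    hence "sublist w (theta ((theta ^^ m) [A]))" using n by simp
    thus ?thesis by (rule sublist_D)
  qed
qed

lemma fac_P: "P x y m \<Longrightarrow> \<exists>u. length u = m \<and> fac (x # u @ [y])"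
  by (simp add: P_def)

lemma complete:
  assumes "k \<le> l + 2" "l \<le> k + 2" "0 < k + l"
  shows "\<exists>w. fac w \<and> w \<noteq> [] \<and> ca w = k \<and> cb w = l"
proof -
  have sub: "\<And>v p s. fac (p @ v @ s) \<Longrightarrow> fac v" using fac_sub unfolding sublist_def by blast
  obtain u where u: "length u = l" "fac (B # u @ [A])" using fac_P[OF P_all] by blast
  obtain u' where u': "length u' = k" "fac (A # u' @ [B])" using fac_P[OF P_all] by blast
  have t1: "fac ([B] @ (A # theta u @ [A]) @ [B])"
    using fac_theta[OF u(2)] by simp
  have t2: "fac ([A] @ (B # theta u' @ [B]) @ [A])"
    using fac_theta[OF u'(2)] by simp
  consider "k = l" | "k = l + 1" | "k = l + 2" | "l = k + 1" | "l = k + 2" using assms by linarith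
  thus ?thesis
  proof cases
    case 1
    obtain z where z: "length z = l - 1" "fac (A # z @ [A])" using fac_P[OF P_all] by blast
    have "fac ([] @ theta (A # z) @ theta [A])" using fac_theta[OF z(2)] by simp
    hence "fac (theta (A # z))" by (rule sub)
    moreover have "length (A # z) = l" using z(1) 1 assms by simp
    moreover have "ca (theta (A # z)) = l" "cb (theta (A # z)) = l"
      using \<open>length (A # z) = l\<close> by (simp only: ca_theta cb_theta)+
    moreover have "theta (A # z) \<noteq> []" by simp
    ultimately show ?thesis using 1 by blast
  next
    case 2
    have "fac ([B] @ (A # theta u) @ [A, B])" using t1 by simp
    hence "fac (A # theta u)" by (rule sub)
    thus ?thesis using 2 u by (intro exI[of _ "A # theta u"]) (simp add: cnt_simps)
  next
    case 3
    have "fac (A # theta u @ [A])" using t1 by (rule sub)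
    thus ?thesis using 3 u by (intro exI[of _ "A # theta u @ [A]"]) (simp add: cnt_simps)
  next
    case 4
    have "fac ([A] @ (B # theta u') @ [B, A])" using t2 by simp
    hence "fac (B # theta u')" by (rule sub)
    thus ?thesis using 4 u' by (intro exI[of _ "B # theta u'"]) (simp add: cnt_simps)
  next
    case 5
    have "fac (B # theta u' @ [B])" using t2 by (rule sub)
    thus ?thesis using 5 u' by (intro exI[of _ "B # theta u' @ [B]"]) (simp add: cnt_simps)
  qed
qed

lemma inf_part:
  assumes "sa + sb \<ge> (6::nat)"
  shows "infinite {n::nat. 1 \<le> n \<and> \<not>(\<exists>k l. k \<le> l+2 \<and> l \<le> k+2 \<and> n = k*sa+l*sb)}"
proof -
  define N where "N = int (sa + sb)"
  define R where "R = (\<lambda>d. (d * int sa) mod N) ` {-2..2}"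
  have "card R \<le> card {-2..2::int}" unfolding R_def by (rule card_image_le) simp
  also have "\<dots> = 5" by simp
  finally have cR: "card R \<le> 5" .
  have "card {0..<N} \<ge> 6" using assms unfolding N_def by simp
  hence "\<not> {0..<N} \<subseteq> R" using cR card_mono[of R "{0..<N}"] unfolding R_def by fastforce
  then obtain r where r: "0 \<le> r" "r < N" "r \<notin> R" by (auto simp: subset_iff)
  define f where "f j = nat r + (sa+sb)*(Suc j)" for j
  have "inj f" using assms unfolding inj_def f_def by auto
  hence inf: "infinite (range f)" using finite_imageD by blast
  have key: "1 \<le> f j \<and> \<not>(\<exists>k l. k \<le> l+2 \<and> l \<le> k+2 \<and> f j = k*sa+l*sb)" for j
  proof -
    have g1: "1 \<le> f j" using assms unfolding f_def by (simp add: add_increasing)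
    moreover have "\<not>(k \<le> l+2 \<and> l \<le> k+2 \<and> f j = k*sa+l*sb)" for k l
    proof
      assume h: "k \<le> l+2 \<and> l \<le> k+2 \<and> f j = k*sa+l*sb"
      have e1: "int (f j) = r + N * int (Suc j)" unfolding f_def N_def using r(1) by (simp add: algebra_simps)
      have "int (f j) mod N = r" unfolding e1 using r by simp
      moreover have "int (f j) = (int k - int l) * int sa + int l * N"
        using h unfolding N_def by (simp add: algebra_simps)
      hence "int (f j) mod N = ((int k - int l) * int sa) mod N" by simp
      moreover have "int k - int l \<in> {-2..2}" using h by auto
      ultimately have "r \<in> R" unfolding R_def by force
      thus False using r(3) by blast
    qed
    ultimately show ?thesis by blast
  qed
  have "range f \<subseteq> {n::nat. 1 \<le> n \<and> \<not>(\<exists>k l. k \<le> l+2 \<and> l \<le> k+2 \<and> n = k*sa+l*sb)}"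
  proof (rule subsetI)
    fix x assume "x \<in> range f"
    then obtain j where "x = f j" by blast
    thus "x \<in> {n::nat. 1 \<le> n \<and> \<not>(\<exists>k l. k \<le> l+2 \<and> l \<le> k+2 \<and> n = k*sa+l*sb)}"
      using key[of j] by simp
  qed
  thus ?thesis using inf infinite_super by blast
qed

lemma c11: assumes "1 \<le> n" "n \<noteq> 0"
  shows "\<exists>k l. k \<le> l+2 \<and> l \<le> k+2 \<and> n = k*1+l*(1::nat)"
proof -
  define q where "q = n div 2"
  define r where "r = n mod 2"
  have n: "n = 2*q + r" "r < 2" unfolding q_def r_def by simp_all
  consider "r = 0" | "r = 1" using n(2) by linarith
  thus ?thesis
  proof cases
    case 1 show ?thesis by (rule exI[of _ "q"], rule exI[of _ "q"]) (use n 1 in simp)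
  next
    case 2 show ?thesis by (rule exI[of _ "q+1"], rule exI[of _ "q"]) (use n 2 in simp)
  qed
qed

lemma c12: assumes "1 \<le> n" "n \<noteq> 0"
  shows "\<exists>k l. k \<le> l+2 \<and> l \<le> k+2 \<and> n = k*1+l*(2::nat)"
proof -
  define q where "q = n div 3"
  define r where "r = n mod 3"
  have n: "n = 3*q + r" "r < 3" unfolding q_def r_def by simp_all
  consider "r = 0" | "r = 1" | "r = 2" using n(2) by linarith
  thus ?thesis
  proof cases
    case 1 show ?thesis by (rule exI[of _ "q"], rule exI[of _ "q"]) (use n 1 in simp)
  next
    case 2 show ?thesis by (rule exI[of _ "q+1"], rule exI[of _ "q"]) (use n 2 in simp)
  next
    case 3 show ?thesis by (rule exI[of _ "q"], rule exI[of _ "q+1"]) (use n 3 in simp)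
  qed
qed

lemma c13: assumes "1 \<le> n" "n \<noteq> 0"
  shows "\<exists>k l. k \<le> l+2 \<and> l \<le> k+2 \<and> n = k*1+l*(3::nat)"
proof -
  define q where "q = n div 4"
  define r where "r = n mod 4"
  have n: "n = 4*q + r" "r < 4" unfolding q_def r_def by simp_all
  consider "r = 0" | "r = 1" | "r = 2" | "r = 3" using n(2) by linarith
  thus ?thesis
  proof cases
    case 1 show ?thesis by (rule exI[of _ "q"], rule exI[of _ "q"]) (use n 1 in simp)
  next
    case 2 show ?thesis by (rule exI[of _ "q+1"], rule exI[of _ "q"]) (use n 2 in simp)
  next
    case 3 show ?thesis by (rule exI[of _ "q+2"], rule exI[of _ "q"]) (use n 3 in simp)
  next
    case 4 show ?thesis by (rule exI[of _ "q"], rule exI[of _ "q+1"]) (use n 4 in simp)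
  qed
qed

lemma c14: assumes "1 \<le> n" "n \<noteq> 3"
  shows "\<exists>k l. k \<le> l+2 \<and> l \<le> k+2 \<and> n = k*1+l*(4::nat)"
proof -
  define q where "q = n div 5"
  define r where "r = n mod 5"
  have n: "n = 5*q + r" "r < 5" unfolding q_def r_def by simp_all
  consider "r = 0" | "r = 1" | "r = 2" | "r = 3" | "r = 4" using n(2) by linarith
  thus ?thesis
  proof cases
    case 1 show ?thesis by (rule exI[of _ "q"], rule exI[of _ "q"]) (use n 1 in simp)
  next
    case 2 show ?thesis by (rule exI[of _ "q+1"], rule exI[of _ "q"]) (use n 2 in simp)
  next
    case 3 show ?thesis by (rule exI[of _ "q+2"], rule exI[of _ "q"]) (use n 3 in simp)
  next
    case 4
    have "q \<noteq> 0" using n 4 assms by auto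
    then obtain p where p: "q = Suc p" by (cases q) auto
    show ?thesis by (rule exI[of _ "p"], rule exI[of _ "p+2"]) (use n 4 p in simp)
  next
    case 5 show ?thesis by (rule exI[of _ "q"], rule exI[of _ "q+1"]) (use n 5 in simp)
  qed
qed

lemma c23: assumes "1 \<le> n" "n \<noteq> 1"
  shows "\<exists>k l. k \<le> l+2 \<and> l \<le> k+2 \<and> n = k*2+l*(3::nat)"
proof -
  define q where "q = n div 5"
  define r where "r = n mod 5"
  have n: "n = 5*q + r" "r < 5" unfolding q_def r_def by simp_all
  consider "r = 0" | "r = 1" | "r = 2" | "r = 3" | "r = 4" using n(2) by linarith
  thus ?thesis
  proof cases
    case 1 show ?thesis by (rule exI[of _ "q"], rule exI[of _ "q"]) (use n 1 in simp)
  next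
    case 2
    have "q \<noteq> 0" using n 2 assms by auto
    then obtain p where p: "q = Suc p" by (cases q) auto
    show ?thesis by (rule exI[of _ "p"], rule exI[of _ "p+2"]) (use n 2 p in simp)
  next
    case 3 show ?thesis by (rule exI[of _ "q+1"], rule exI[of _ "q"]) (use n 3 in simp)
  next
    case 4 show ?thesis by (rule exI[of _ "q"], rule exI[of _ "q+1"]) (use n 4 in simp)
  next
    case 5 show ?thesis by (rule exI[of _ "q+2"], rule exI[of _ "q"]) (use n 5 in simp)
  qed
qed

lemma swap_rep: "(\<exists>k l. k \<le> l+2 \<and> l \<le> k+2 \<and> n = k*a+l*(b::nat)) \<Longrightarrow> (\<exists>k l. k \<le> l+2 \<and> l \<le> k+2 \<and> n = k*b+l*a)"
proof -
  assume "\<exists>k l. k \<le> l+2 \<and> l \<le> k+2 \<and> n = k*a+l*(b::nat)"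
  then obtain k l where "k \<le> l+2" "l \<le> k+2" "n = k*a+l*b" by blast
  thus ?thesis by (intro exI[of _ l] exI[of _ k]) simp
qed

lemma small_part:
  assumes "sa \<ge> 1" "sb \<ge> 1" "gcd sa sb = 1" "sa + sb < (6::nat)"
  shows "\<exists>m. \<forall>n::nat. 1 \<le> n \<longrightarrow> n \<noteq> m \<longrightarrow> (\<exists>k l. k \<le> l+2 \<and> l \<le> k+2 \<and> n = k*sa+l*sb)"
proof -
  have "(sa = 1 \<and> sb = 1) \<or> (sa = 1 \<and> sb = 2) \<or> (sa = 1 \<and> sb = 3) \<or> (sa = 1 \<and> sb = 4)
    \<or> (sa = 2 \<and> sb = 1) \<or> (sa = 2 \<and> sb = 3) \<or> (sa = 3 \<and> sb = 1) \<or> (sa = 3 \<and> sb = 2)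
    \<or> (sa = 4 \<and> sb = 1) \<or> (sa = 2 \<and> sb = 2)"
    using assms by presburger
  then consider "sa = 1" "sb = 1" | "sa = 1" "sb = 2" | "sa = 1" "sb = 3" | "sa = 1" "sb = 4"
    | "sa = 2" "sb = 1" | "sa = 2" "sb = 3" | "sa = 3" "sb = 1" | "sa = 3" "sb = 2"
    | "sa = 4" "sb = 1" | "sa = 2" "sb = 2"
    by blast
  thus ?thesis
  proof cases
    case 1 thus ?thesis using c11 by blast
  next
    case 2 thus ?thesis using c12 by blast
  next
    case 3 thus ?thesis using c13 by blast
  next
    case 4 thus ?thesis using c14 by blast
  next
    case 5 thus ?thesis using c12 swap_rep by blast
  next
    case 6 thus ?thesis using c23 by blast
  next
    case 7 thus ?thesis using c13 swap_rep by blast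
  next
    case 8 thus ?thesis using c23 swap_rep by blast
  next
    case 9 thus ?thesis using c14 swap_rep by blast
  next
    case 10 thus ?thesis using assms(3) by simp
  qed
qed

lemma M_char:
  "{1..} - S_hom sa sb ` L_TM = {n::nat. 1 \<le> n \<and> \<not>(\<exists>k l. k \<le> l+2 \<and> l \<le> k+2 \<and> n = k*sa+l*sb)}"
proof -
  have "n \<in> S_hom sa sb ` L_TM \<longleftrightarrow> (\<exists>k l. k \<le> l+2 \<and> l \<le> k+2 \<and> n = k*sa+l*sb)" if "1 \<le> n" for n
  proof
    assume "n \<in> S_hom sa sb ` L_TM"
    then obtain w where w: "fac w" "n = ca w * sa + cb w * sb"
      by (auto simp: L_TM_def fac_def S_hom_eq)
    have "\<bar>D w\<bar> \<le> 2" using fac_D[OF w(1)] .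
    hence "ca w \<le> cb w + 2 \<and> cb w \<le> ca w + 2" unfolding D_def by linarith
    thus "\<exists>k l. k \<le> l+2 \<and> l \<le> k+2 \<and> n = k*sa+l*sb" using w(2) by blast
  next
    assume "\<exists>k l. k \<le> l+2 \<and> l \<le> k+2 \<and> n = k*sa+l*sb"
    then obtain k l where kl: "k \<le> l+2" "l \<le> k+2" "n = k*sa+l*sb" by blast
    have "0 < k + l" using kl(3) that by (cases "k + l = 0") auto
    then obtain w where "fac w" "w \<noteq> []" "ca w = k" "cb w = l" using complete kl by blast
    thus "n \<in> S_hom sa sb ` L_TM" using kl(3)
      by (auto simp: L_TM_def fac_def S_hom_eq intro!: image_eqI[of _ _ w])
  qed
  thus ?thesis by auto
qed

theorem theorem8:
  fixes sa sb :: nat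
  assumes "sa \<ge> 1" and "sb \<ge> 1" and "gcd sa sb = 1"
  shows "(infinite ({1..} - S_hom sa sb ` L_TM) \<longleftrightarrow> sa + sb \<ge> 6)
       \<and> (sa + sb < 6 \<longrightarrow>
            ({1..} - S_hom sa sb ` L_TM = {} \<or> (\<exists>m. {1..} - S_hom sa sb ` L_TM = {m})))"
proof -
  have sm: "sa + sb < 6 \<Longrightarrow> \<exists>m. {1..} - S_hom sa sb ` L_TM \<subseteq> {m}"
  proof -
    assume h6: "sa + sb < 6"
    obtain m where "\<forall>n::nat. 1 \<le> n \<longrightarrow> n \<noteq> m \<longrightarrow> (\<exists>k l. k \<le> l+2 \<and> l \<le> k+2 \<and> n = k*sa+l*sb)"
      using small_part[OF assms h6] by blast
    hence "{1..} - S_hom sa sb ` L_TM \<subseteq> {m}" unfolding M_char by blast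
    thus ?thesis by blast
  qed
  show ?thesis
  proof (intro conjI impI)
    show "infinite ({1..} - S_hom sa sb ` L_TM) \<longleftrightarrow> sa + sb \<ge> 6"
    proof
      assume inf: "infinite ({1..} - S_hom sa sb ` L_TM)"
      show "sa + sb \<ge> 6"
      proof (rule ccontr)
        assume "\<not> sa + sb \<ge> 6"
        then obtain m where "{1..} - S_hom sa sb ` L_TM \<subseteq> {m}" using sm by auto
        thus False using inf finite_subset[of _ "{m}"] by auto
      qed
    next
      assume "sa + sb \<ge> 6"
      thus "infinite ({1..} - S_hom sa sb ` L_TM)" unfolding M_char by (rule inf_part)
    qed
  next
    assume h6: "sa + sb < 6"
    obtain m where "{1..} - S_hom sa sb ` L_TM \<subseteq> {m}" using sm h6 by blast
    thus "{1..} - S_hom sa sb ` L_TM = {} \<or> (\<exists>m. {1..} - S_hom sa sb ` L_TM = {m})"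
      unfolding subset_singleton_iff by blast
  qed
qed

end
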